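(* Let $g_n$, $n\in\mathbb N$, be wasteful partial functions from $X^M$ to a set $Y$. Then there exist a set $A\subseteq X^M$ of width $1$, injective partial functions $g_n'\subseteq g_n$ ($n\in\mathbb N$) such that $A$ is the disjoint union of the sets $\operatorname{dom}(g_n')$, and partial functions $h_n$ from $X^M$ to $A$, such that $g_n=g_n'\circ h_n$ for all $n\in\mathbb N$.
   Context: $X=\omega\times\omega$, elements $(a|b)$ ($x$-coordinate $a$, $y$-coordinate $b$); $M=\{1,\dots,m\}$. Width of $Y\subseteq X$: $\sup_n|Y\cap(\omega\times\{n\})|$; the width of a set $A\subseteq X^M$ is the maximum of the widths of its projections onto the components $i\in M$. $B^M_k=\{u\in X^M:\exists i\in M\,((u_i)^y<k)\}$; a subset of $X^M$ is bounded iff contained in some $B^M_k$. A partial function $p$ from $X^M$ to $Y$ is wasteful iff $p^{-1}[d]$ is unbounded for every $d\in\operatorname{ran}(p)$. Composition of partial functions: $(g\circ h)(u)$ is defined iff $h(u)$ is defined and lies in $\operatorname{dom}(g)$. *)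

theory Defs
  imports Main "HOL-Library.FuncSet" "HOL-Library.Extended_Nat" "HOL-Library.Disjoint_Sets"
begin

text \<open>X = omega x omega; a point (a|b) is the pair (a, b), x-coordinate fst, y-coordinate snd.\<close>

type_synonym pt = "nat \<times> nat"

definition XM :: "nat \<Rightarrow> (nat \<Rightarrow> pt) set" where
  "XM m = PiE {1..m} (\<lambda>_. UNIV)"

definition row_size :: "pt set \<Rightarrow> nat \<Rightarrow> enat" where
  "row_size Y n = (let S = Y \<inter> (UNIV \<times> {n}) in if finite S then enat (card S) else \<infinity>)"

definition width :: "pt set \<Rightarrow> enat" where
  "width Y = (SUP n. row_size Y n)"

definition widthM :: "nat \<Rightarrow> (nat \<Rightarrow> pt) set \<Rightarrow> enat" where
  "widthM m A = (SUP i\<in>{1..m}. width ((\<lambda>u. u i) ` A))"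

definition BM :: "nat \<Rightarrow> nat \<Rightarrow> (nat \<Rightarrow> pt) set" where
  "BM m k = {u \<in> XM m. \<exists>i\<in>{1..m}. snd (u i) < k}"

definition boundedM :: "nat \<Rightarrow> (nat \<Rightarrow> pt) set \<Rightarrow> bool" where
  "boundedM m S \<longleftrightarrow> (\<exists>k. S \<subseteq> BM m k)"

definition wasteful :: "nat \<Rightarrow> ((nat \<Rightarrow> pt) \<Rightarrow> 'y option) \<Rightarrow> bool" where
  "wasteful m p \<longleftrightarrow> (\<forall>d\<in>ran p. \<not> boundedM m {u. p u = Some d})"

end

theory Submission
  imports Defs "HOL-Library.Countable_Set"
begin

definition pickF :: "nat \<Rightarrow> (nat \<Rightarrow> (nat\<Rightarrow>pt) set) \<Rightarrow> nat \<Rightarrow> nat \<Rightarrow> (nat\<Rightarrow>pt)" where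
  "pickF m F j k = (SOME u. u \<in> F j \<and> (\<forall>i\<in>{1..m}. k \<le> snd (u i)))"

primrec Tf :: "nat \<Rightarrow> (nat \<Rightarrow> (nat\<Rightarrow>pt) set) \<Rightarrow> nat \<Rightarrow> nat" where
  "Tf m F 0 = 0"
| "Tf m F (Suc j) = Suc (Max ((\<lambda>i. snd (pickF m F j (Tf m F j) i)) ` {1..m}))"

definition ptF :: "nat \<Rightarrow> (nat \<Rightarrow> (nat\<Rightarrow>pt) set) \<Rightarrow> nat \<Rightarrow> (nat\<Rightarrow>pt)" where
  "ptF m F j = pickF m F j (Tf m F j)"

lemma countable_PiE':
  "finite I \<Longrightarrow> (\<And>i. i \<in> I \<Longrightarrow> countable (F i)) \<Longrightarrow> countable (Pi\<^sub>E I F)"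
  by (induct I arbitrary: F rule: finite_induct) (auto simp: PiE_insert_eq)

lemma subsing_finite: "\<forall>x\<in>S. \<forall>y\<in>S. x = y \<Longrightarrow> finite S"
proof (cases "S = {}")
  case False
  assume h: "\<forall>x\<in>S. \<forall>y\<in>S. x = y"
  obtain x where "x \<in> S" using False by auto
  then have "S \<subseteq> {x}" using h by auto
  then show ?thesis using finite_subset by auto
qed simp

locale ptloc =
  fixes m :: nat and F :: "nat \<Rightarrow> (nat\<Rightarrow>pt) set"
  assumes m1: "m \<ge> 1"
    and ex: "\<And>j k. \<exists>u\<in>F j. \<forall>i\<in>{1..m}. k \<le> snd (u i)"
begin

lemma pick: "pickF m F j k \<in> F j \<and> (\<forall>i\<in>{1..m}. k \<le> snd (pickF m F j k i))"
  unfolding pickF_def using someI_ex[OF ex[of j k, unfolded Bex_def]] by blast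

lemma pt_in: "ptF m F j \<in> F j"
  using pick unfolding ptF_def by blast

lemma pt_ge: "i \<in> {1..m} \<Longrightarrow> Tf m F j \<le> snd (ptF m F j i)"
  using pick unfolding ptF_def by blast

lemma pt_lt: "i \<in> {1..m} \<Longrightarrow> snd (ptF m F j i) < Tf m F (Suc j)"
proof -
  assume i: "i \<in> {1..m}"
  have "snd (ptF m F j i) \<le> Max ((\<lambda>i. snd (pickF m F j (Tf m F j) i)) ` {1..m})"
    unfolding ptF_def by (rule Max_ge) (use i in auto)
  then show ?thesis by simp
qed

lemma Tf_mono: "j \<le> j' \<Longrightarrow> Tf m F j \<le> Tf m F j'"
proof (rule lift_Suc_mono_le[of "Tf m F"])
  fix n
  have "1 \<in> {1..m}" using m1 by auto
  then show "Tf m F n \<le> Tf m F (Suc n)"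
    using pt_ge[of 1 n] pt_lt[of 1 n] by linarith
qed

lemma pt_strict: "j < j' \<Longrightarrow> i \<in> {1..m} \<Longrightarrow> i' \<in> {1..m} \<Longrightarrow>
   snd (ptF m F j i) < snd (ptF m F j' i')"
  using pt_lt[of i j] Tf_mono[of "Suc j" j'] pt_ge[of i' j'] by linarith

lemma pt_inj: "ptF m F j = ptF m F j' \<Longrightarrow> j = j'"
proof (rule ccontr)
  assume e: "ptF m F j = ptF m F j'" and ne: "j \<noteq> j'"
  have "1 \<in> {1..m}" using m1 by auto
  then show False using ne pt_strict[of j j' 1 1] pt_strict[of j' j 1 1] e
    by (cases "j < j'") auto
qed

lemma width_le: assumes B: "B \<subseteq> range (ptF m F)" shows "widthM m B \<le> 1"
  unfolding widthM_def
proof (rule SUP_least)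
  fix i assume i: "i \<in> {1..m}"
  show "width ((\<lambda>u. u i) ` B) \<le> 1"
    unfolding width_def
  proof (rule SUP_least)
    fix r
    let ?S = "(\<lambda>u. u i) ` B \<inter> (UNIV \<times> {r})"
    have sub: "\<forall>x\<in>?S. \<forall>y\<in>?S. x = y"
    proof (intro ballI)
      fix x y assume x: "x \<in> ?S" and y: "y \<in> ?S"
      obtain j where xj: "x = ptF m F j i" using x B by auto
      obtain j' where yj: "y = ptF m F j' i" using y B by auto
      have "snd x = r" "snd y = r" using x y by (simp_all add: mem_Times_iff)
      then have "snd x = snd y" by simp
      then have "j = j'" using pt_strict[of j j' i i] pt_strict[of j' j i i] i xj yj
        by (cases "j < j'"; cases "j' < j") auto
      then show "x = y" using xj yj by simp
    qed
    then have fin: "finite ?S"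
      by (rule subsing_finite)
    have "card ?S \<le> 1" using sub fin card_le_Suc0_iff_eq by auto
    then show "row_size ((\<lambda>u. u i) ` B) r \<le> 1"
      unfolding row_size_def Let_def using fin by (simp add: one_enat_def)
  qed
qed

end

theorem mainTheorem5:
  fixes m :: nat
    and g :: "nat \<Rightarrow> ((nat \<Rightarrow> pt) \<Rightarrow> 'y option)"
  assumes "m \<ge> 1"
    and "\<And>n. dom (g n) \<subseteq> XM m"
    and "\<And>n. wasteful m (g n)"
  shows "\<exists>(A :: (nat \<Rightarrow> pt) set) (g' :: nat \<Rightarrow> ((nat \<Rightarrow> pt) \<Rightarrow> 'y option))
            (h :: nat \<Rightarrow> ((nat \<Rightarrow> pt) \<Rightarrow> (nat \<Rightarrow> pt) option)).
           A \<subseteq> XM m \<and> widthM m A \<le> 1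
         \<and> (\<forall>n. g' n \<subseteq>\<^sub>m g n \<and> inj_on (g' n) (dom (g' n)))
         \<and> A = (\<Union>n. dom (g' n)) \<and> disjoint_family (\<lambda>n. dom (g' n))
         \<and> (\<forall>n. dom (h n) \<subseteq> XM m \<and> ran (h n) \<subseteq> A \<and> g n = g' n \<circ>\<^sub>m h n)"
proof -
  define S where "S = Sigma UNIV (\<lambda>n. ran (g n))"
  show ?thesis
  proof (cases "S = {}")
    case True
    have ge: "\<And>n u. g n u = None"
    proof -
      fix n u show "g n u = None"
      proof (cases "g n u")
        case (Some d) then have "(n, d) \<in> S" unfolding S_def ran_def by auto
        then show ?thesis using True by auto
      qed
    qed
    have w0: "widthM m {} \<le> 1"
      unfolding widthM_def width_def row_size_def
      by (rule SUP_least, rule SUP_least) (simp add: zero_enat_def[symmetric])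
    show ?thesis
      apply (rule exI[of _ "{}"], rule exI[of _ g], rule exI[of _ "\<lambda>_. Map.empty"])
      using w0 by (simp add: ge fun_eq_iff map_le_def disjoint_family_on_def dom_def map_comp_def)
  next
    case False
    have cX: "countable (XM m)" unfolding XM_def
      by (rule countable_PiE') auto
    have cr: "countable (ran (g n))" for n
    proof -
      have "ran (g n) = (\<lambda>u. the (g n u)) ` dom (g n)" unfolding ran_def dom_def by force
      then show ?thesis using countable_subset[OF assms(2) cX] by simp
    qed
    have cS: "countable S" unfolding S_def by (rule countable_SIGMA) (auto simp: cr)
    define enum where "enum = from_nat_into S"
    have renum: "range enum = S" unfolding enum_def using range_from_nat_into[OF False cS] .
    define F where "F j = {u. g (fst (enum j)) u = Some (snd (enum j))}" for j
    interpret ptloc m F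
    proof
      show "m \<ge> 1" by fact
      fix j k
      have "enum j \<in> S" using renum by auto
      then have d: "snd (enum j) \<in> ran (g (fst (enum j)))" unfolding S_def
        by (cases "enum j") auto
      then have "\<not> boundedM m {u. g (fst (enum j)) u = Some (snd (enum j))}"
        using assms(3) unfolding wasteful_def by blast
      then obtain u where u: "g (fst (enum j)) u = Some (snd (enum j))" and "u \<notin> BM m k"
        unfolding boundedM_def by blast
      moreover have "u \<in> XM m" using assms(2) u by blast
      ultimately show "\<exists>u\<in>F j. \<forall>i\<in>{1..m}. k \<le> snd (u i)"
        unfolding F_def BM_def by (auto simp: not_less)
    qed
    define idx where "idx n d = (LEAST j. enum j = (n, d))" for n d
    define a where "a n d = ptF m F (idx n d)" for n d
    have idx_e: "d \<in> ran (g n) \<Longrightarrow> enum (idx n d) = (n, d)" for n d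
    proof -
      assume "d \<in> ran (g n)"
      then have "(n, d) \<in> range enum" using renum S_def by auto
      then obtain j where "enum j = (n,d)" by auto
      then show ?thesis unfolding idx_def by (rule LeastI)
    qed
    have ga: "d \<in> ran (g n) \<Longrightarrow> g n (a n d) = Some d" for n d
      using pt_in[of "idx n d"] idx_e[of d n] unfolding a_def F_def by simp
    have a_inj: "d \<in> ran (g n) \<Longrightarrow> d' \<in> ran (g n') \<Longrightarrow> a n d = a n' d' \<Longrightarrow> n = n' \<and> d = d'"
      for n n' d d'
    proof -
      assume h: "d \<in> ran (g n)" "d' \<in> ran (g n')" "a n d = a n' d'"
      have "idx n d = idx n' d'" using h(3) unfolding a_def by (rule pt_inj)
      then have "(n, d) = (n', d')"
        using idx_e[OF h(1)] idx_e[OF h(2)] by (metis (no_types))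
      then show ?thesis by simp
    qed
    define A where "A = {a n d | n d. d \<in> ran (g n)}"
    define g' where "g' n u = (if \<exists>d\<in>ran (g n). u = a n d then g n u else None)" for n u
    define h where "h n u = map_option (a n) (g n u)" for n u
    have domg': "dom (g' n) = {a n d | d. d \<in> ran (g n)}" for n
    proof (intro set_eqI iffI)
      fix u assume "u \<in> dom (g' n)"
      then have "(\<exists>d\<in>ran (g n). u = a n d)" unfolding g'_def dom_def by (auto split: if_splits)
      then show "u \<in> {a n d | d. d \<in> ran (g n)}" by blast
    next
      fix u assume "u \<in> {a n d | d. d \<in> ran (g n)}"
      then obtain d where d: "d \<in> ran (g n)" "u = a n d" by blast
      then have "g' n u = Some d" unfolding g'_def using ga[OF d(1)] by auto
      then show "u \<in> dom (g' n)" by blast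
    qed
    have ranin: "d \<in> ran (g n)" if "g n u = Some d" for n u d
      using that unfolding ran_def by auto
    show ?thesis
    proof (rule exI[of _ A], rule exI[of _ g'], rule exI[of _ h], intro conjI allI)
      show "A \<subseteq> XM m"
      proof
        fix u assume "u \<in> A"
        then obtain n d where d: "d \<in> ran (g n)" "u = a n d" unfolding A_def by blast
        then have "u \<in> dom (g n)" using ga[OF d(1)] by blast
        then show "u \<in> XM m" using assms(2) by blast
      qed
      show "widthM m A \<le> 1" by (rule width_le) (unfold A_def a_def, blast)
      fix n
      show "g' n \<subseteq>\<^sub>m g n" unfolding map_le_def g'_def dom_def by auto
      show "inj_on (g' n) (dom (g' n))"
      proof (rule inj_onI)
        fix u v assume u: "u \<in> dom (g' n)" and v: "v \<in> dom (g' n)" and e: "g' n u = g' n v"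
        obtain d where d: "d \<in> ran (g n)" "u = a n d" using u domg' by auto
        obtain d' where d': "d' \<in> ran (g n)" "v = a n d'" using v domg' by auto
        have "g' n u = Some d" "g' n v = Some d'" using d d' ga unfolding g'_def by auto
        then show "u = v" using e d d' by simp
      qed
    next
      show "A = (\<Union>n. dom (g' n))" unfolding A_def domg' by blast
      show "disjoint_family (\<lambda>n. dom (g' n))"
        unfolding disjoint_family_on_def
      proof (intro ballI impI)
        fix n n' :: nat assume ne: "n \<noteq> n'"
        show "dom (g' n) \<inter> dom (g' n') = {}"
        proof (rule ccontr)
          assume "dom (g' n) \<inter> dom (g' n') \<noteq> {}"
          then obtain u where "u \<in> dom (g' n)" "u \<in> dom (g' n')" by blast
          then obtain d d' where "d \<in> ran (g n)" "u = a n d" "d' \<in> ran (g n')" "u = a n' d'"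
            unfolding domg' by blast
          then show False using a_inj[of d n d' n'] ne by simp
        qed
      qed
      fix n
      show "dom (h n) \<subseteq> XM m" unfolding h_def dom_def using assms(2) by auto
      show "ran (h n) \<subseteq> A"
      proof
        fix v assume "v \<in> ran (h n)"
        then obtain u where "h n u = Some v" unfolding ran_def by blast
        then obtain d where d: "g n u = Some d" "v = a n d" unfolding h_def by auto
        then show "v \<in> A" unfolding A_def using ranin[OF d(1)] by blast
      qed
      show "g n = g' n \<circ>\<^sub>m h n"
      proof
        fix u show "g n u = (g' n \<circ>\<^sub>m h n) u"
        proof (cases "g n u")
          case None then show ?thesis by (simp add: h_def map_comp_def)
        next
          case (Some d)
          then have "d \<in> ran (g n)" by (rule ranin)
          then show ?thesis using Some ga[of d n] by (auto simp: h_def map_comp_def g'_def)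
        qed
      qed
    qed
  qed
qed

end
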